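(* Let $L\ge 2$ and let $M_1,\dots,M_L$ be pairwise distinct positive integers. Let $N$ be an integer with $0\le N<\operatorname{lcm}(M_1,\dots,M_L)$, and for $1\le i\le L$ let $r_i\in\{0,\dots,M_i-1\}$ be the remainder of $N$ modulo $M_i$ and $n_i=(N-r_i)/M_i$. Let $\tilde r_1,\dots,\tilde r_L$ be integers with $0\le\tilde r_i\le M_i-1$, and let $\tau_1,\dots,\tau_L\ge0$ with $|\tilde r_i-r_i|\le\tau_i$. Let $k$ be an index with $$\min_{j\ne k}\frac{\gcd(M_k,M_j)}{4}=\max_{1\le i\le L}\min_{j\ne i}\frac{\gcd(M_i,M_j)}{4},$$ and suppose $\tau_k<\min_{j\ne k}\gcd(M_k,M_j)/4$ and, for every $i\ne k$, $$\tau_i\le\frac{\gcd(M_k,M_i)}{2}-\min_{j\ne k}\frac{\gcd(M_k,M_j)}{4}.$$ Then the single-stage algorithm (described in the context) run on the moduli $M_1,\dots,M_L$ with reference index $k$ and inputs $\tilde r_1,\dots,\tilde r_L$ outputs $\hat n_i=n_i$ for all $1\le i\le L$.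
   Context: For $x\in\mathbb R$, $[x]$ denotes the unique integer with $-1/2\le x-[x]<1/2$. Single-stage algorithm: let $P_1,\dots,P_m$ ($m\ge2$) be pairwise distinct positive integers, $k\in\{1,\dots,m\}$ a reference index, and $x_1,\dots,x_m$ integers. For each $i\ne k$ put $m_{ki}=\gcd(P_k,P_i)$, $\Gamma_{ki}=P_k/m_{ki}$, $\Gamma_{ik}=P_i/m_{ki}$, $\hat q_{ik}=[(x_i-x_k)/m_{ki}]$; let $\bar\Gamma_{ki}$ be a multiplicative inverse of $\Gamma_{ki}$ modulo $\Gamma_{ik}$, and let $\hat\xi_{ik}\in\{0,\dots,\Gamma_{ik}-1\}$ with $\hat\xi_{ik}\equiv\hat q_{ik}\bar\Gamma_{ki}\pmod{\Gamma_{ik}}$. Let $\hat n_k$ be the least nonnegative integer $y$ with $y\equiv\hat\xi_{ik}\pmod{\Gamma_{ik}}$ for all $i\ne k$ (if no such $y$ exists the algorithm fails). For $i\ne k$ set $\hat n_i=(\hat n_k\Gamma_{ki}-\hat q_{ik})/\Gamma_{ik}$. Outputs: $\hat n_1,\dots,\hat n_m$ and the estimate $[\frac1m\sum_{i=1}^m(\hat n_iP_i+x_i)]$. *)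

theory Defs
  imports "HOL-Number_Theory.Number_Theory"
begin

definition rnd :: "real \<Rightarrow> int" where
  "rnd x = (THE z. -1/2 \<le> x - real_of_int z \<and> x - real_of_int z < 1/2)"

definition ss_Gamma :: "(nat \<Rightarrow> int) \<Rightarrow> nat \<Rightarrow> nat \<Rightarrow> int" where
  "ss_Gamma P a b = P a div gcd (P a) (P b)"

definition ss_q :: "(nat \<Rightarrow> int) \<Rightarrow> (nat \<Rightarrow> int) \<Rightarrow> nat \<Rightarrow> nat \<Rightarrow> int" where
  "ss_q P x k i = rnd (real_of_int (x i - x k) / real_of_int (gcd (P k) (P i)))"

definition ss_inv :: "(nat \<Rightarrow> int) \<Rightarrow> nat \<Rightarrow> nat \<Rightarrow> int" where
  "ss_inv P k i = (SOME g. [ss_Gamma P k i * g = 1] (mod ss_Gamma P i k))"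

definition ss_xi :: "(nat \<Rightarrow> int) \<Rightarrow> (nat \<Rightarrow> int) \<Rightarrow> nat \<Rightarrow> nat \<Rightarrow> int" where
  "ss_xi P x k i = (ss_q P x k i * ss_inv P k i) mod ss_Gamma P i k"

definition ss_nk :: "(nat \<Rightarrow> int) \<Rightarrow> (nat \<Rightarrow> int) \<Rightarrow> nat \<Rightarrow> nat \<Rightarrow> int option" where
  "ss_nk P x m k =
    (if \<exists>y::nat. \<forall>i\<in>{1..m} - {k}. [int y = ss_xi P x k i] (mod ss_Gamma P i k)
     then Some (int (LEAST y::nat. \<forall>i\<in>{1..m} - {k}. [int y = ss_xi P x k i] (mod ss_Gamma P i k)))
     else None)"

text \<open>Outputs hat n_1..hat n_m (as a function on indices; values outside 1..m irrelevant),
  or None if the algorithm fails.\<close>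
definition single_stage :: "(nat \<Rightarrow> int) \<Rightarrow> (nat \<Rightarrow> int) \<Rightarrow> nat \<Rightarrow> nat \<Rightarrow> (nat \<Rightarrow> int) option" where
  "single_stage P x m k =
    (case ss_nk P x m k of None \<Rightarrow> None
     | Some nk \<Rightarrow> Some (\<lambda>i. if i = k then nk
                        else (nk * ss_Gamma P k i - ss_q P x k i) div ss_Gamma P i k))"

definition ss_mu :: "(nat \<Rightarrow> int) \<Rightarrow> nat \<Rightarrow> nat \<Rightarrow> real" where
  "ss_mu M L i = Min ((\<lambda>j. real_of_int (gcd (M i) (M j)) / 4) ` ({1..L} - {i}))"

end

theory Submission
  imports Defs
begin

lemma rnd_eqI:
  assumes "-1/2 \<le> x - real_of_int z" "x - real_of_int z < 1/2"
  shows "rnd x = z"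
  unfolding rnd_def
proof (rule the_equality)
  show "-1/2 \<le> x - real_of_int z \<and> x - real_of_int z < 1/2" using assms by simp
next
  fix z' assume h: "-1/2 \<le> x - real_of_int z' \<and> x - real_of_int z' < 1/2"
  have "real_of_int (z' - z) < 1" "real_of_int (z' - z) > -1" using h assms by auto
  then have "z' - z < 1" "z' - z > -1" by linarith+
  then show "z' = z" by linarith
qed

lemma key_pair:
  fixes Mk Mi rk ri Nn :: int and tk ti :: real
  assumes "Mk > 0" "Mi > 0"
    and "\<bar>real_of_int (rk - Nn mod Mk)\<bar> \<le> tk"
    and "\<bar>real_of_int (ri - Nn mod Mi)\<bar> \<le> ti"
    and "tk + ti < real_of_int (gcd Mk Mi) / 2"
  shows "rnd (real_of_int (ri - rk) / real_of_int (gcd Mk Mi))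
      = Nn div Mk * (Mk div gcd Mk Mi) - Nn div Mi * (Mi div gcd Mk Mi)"
proof -
  define g where "g = gcd Mk Mi"
  have gpos: "g > 0" using assms(1) by (simp add: g_def)
  have hk: "Mk = (Mk div g) * g" by (simp add: g_def)
  have hi: "Mi = (Mi div g) * g" by (simp add: g_def)
  define z where "z = Nn div Mk * (Mk div g) - Nn div Mi * (Mi div g)"
  define ek where "ek = rk - Nn mod Mk"
  define ei where "ei = ri - Nn mod Mi"
  have "Nn mod Mk = Nn - Nn div Mk * Mk" by (simp add: minus_div_mult_eq_mod)
  moreover have "Nn mod Mi = Nn - Nn div Mi * Mi" by (simp add: minus_div_mult_eq_mod)
  moreover have "z*g = Nn div Mk * ((Mk div g)*g) - Nn div Mi * ((Mi div g)*g)"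
    unfolding z_def by (simp add: algebra_simps)
  moreover have "Nn div Mk * ((Mk div g)*g) - Nn div Mi * ((Mi div g)*g) = Nn div Mk * Mk - Nn div Mi * Mi"
    by (simp only: hk[symmetric] hi[symmetric])
  ultimately have "ri - rk = ei - ek + z * g"
    unfolding ek_def ei_def by linarith
  then have "real_of_int (ri - rk) = real_of_int (ei - ek + z * g)" by simp
  then have r: "real_of_int (ri - rk) = real_of_int ei - real_of_int ek + real_of_int z * real_of_int g"
    by simp
  have eq: "real_of_int (ri - rk) / real_of_int g - real_of_int z
      = (real_of_int ei - real_of_int ek) / real_of_int g"
    unfolding r using gpos by (simp add: field_simps)
  have b: "\<bar>real_of_int ei - real_of_int ek\<bar> < real_of_int g / 2"
    using assms(3,4,5) unfolding ek_def ei_def g_def by linarith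
  have gp: "real_of_int g > 0" using gpos by simp
  have lin: "-(real_of_int g / 2) < real_of_int ei - real_of_int ek"
     "real_of_int ei - real_of_int ek < real_of_int g / 2" using b by linarith+
  have "-1/2 \<le> (real_of_int ei - real_of_int ek) / real_of_int g"
    using lin gp by (simp add: field_simps; linarith)
  moreover have "(real_of_int ei - real_of_int ek) / real_of_int g < 1/2"
    using lin gp by (simp add: field_simps; linarith)
  ultimately show ?thesis using eq rnd_eqI unfolding g_def z_def by metis
qed

theorem corollary3:
  fixes L k :: nat and M rt :: "nat \<Rightarrow> int" and N :: int and tau :: "nat \<Rightarrow> real"
  assumes "L \<ge> 2"
    and "\<forall>i\<in>{1..L}. M i > 0"
    and "inj_on M {1..L}"
    and "0 \<le> N" and "N < Lcm (M ` {1..L})"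
    and "\<forall>i\<in>{1..L}. 0 \<le> rt i \<and> rt i \<le> M i - 1"
    and "\<forall>i\<in>{1..L}. tau i \<ge> 0 \<and> \<bar>real_of_int (rt i - N mod M i)\<bar> \<le> tau i"
    and "k \<in> {1..L}"
    and "ss_mu M L k = Max (ss_mu M L ` {1..L})"
    and "tau k < ss_mu M L k"
    and "\<forall>i\<in>{1..L} - {k}. tau i \<le> real_of_int (gcd (M k) (M i)) / 2 - ss_mu M L k"
  shows "\<exists>nh. single_stage M rt L k = Some nh \<and>
           (\<forall>i\<in>{1..L}. nh i = (N - N mod M i) div M i)"
proof -
  define n where "n i = N div M i" for i
  define G where "G a b = ss_Gamma M a b" for a b
  have Mpos: "M k > 0" using assms(2,8) by auto
  have nk0: "n k \<ge> 0" unfolding n_def using Mpos assms(4) by (simp add: pos_imp_zdiv_nonneg_iff)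
  have facts: "M k = G k i * gcd (M k) (M i) \<and> M i = G i k * gcd (M k) (M i) \<and> G i k > 0
      \<and> ss_q M rt k i = n k * G k i - n i * G i k
      \<and> (\<forall>y. [y = ss_xi M rt k i] (mod G i k) \<longleftrightarrow> [y = n k] (mod G i k))"
    if i: "i \<in> {1..L} - {k}" for i
  proof -
    have Mi: "M i > 0" using assms(2) i by auto
    have g: "gcd (M i) (M k) = gcd (M k) (M i)" by (simp add: gcd.commute)
    have h1: "M k = G k i * gcd (M k) (M i)" unfolding G_def ss_Gamma_def by simp
    have h2: "M i = G i k * gcd (M k) (M i)" unfolding G_def ss_Gamma_def g by simp
    have h3: "G i k > 0" using h2 Mi
      by (metis gcd_ge_0_int zero_less_mult_pos2 linorder_not_less antisym_conv1 mult_eq_0_iff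
          less_irrefl)
    have sum: "tau k + tau i < real_of_int (gcd (M k) (M i)) / 2"
    proof -
      have "tau i \<le> real_of_int (gcd (M k) (M i)) / 2 - ss_mu M L k" using assms(11) i by blast
      then show ?thesis using assms(10) by linarith
    qed
    have hq: "ss_q M rt k i = n k * G k i - n i * G i k"
      unfolding ss_q_def n_def G_def ss_Gamma_def g
      by (rule key_pair) (use Mpos Mi assms(7,8) i sum in auto)
    have cop: "coprime (G k i) (G i k)"
      unfolding G_def ss_Gamma_def g using div_gcd_coprime[of "M k" "M i"] Mpos by simp
    then have "\<exists>x. [G k i * x = 1] (mod G i k)" by (rule cong_solve_coprime_int)
    then have inv: "[G k i * ss_inv M k i = 1] (mod G i k)"
      unfolding ss_inv_def G_def by (rule someI_ex)
    have "[ss_q M rt k i = n k * G k i] (mod G i k)"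
      unfolding hq cong_iff_dvd_diff by simp
    then have "[ss_q M rt k i * ss_inv M k i = n k * (G k i * ss_inv M k i)] (mod G i k)"
      by (metis cong_scalar_right mult.assoc)
    also have "[n k * (G k i * ss_inv M k i) = n k * 1] (mod G i k)"
      using inv by (rule cong_scalar_left)
    finally have c: "[ss_xi M rt k i = n k] (mod G i k)"
      unfolding ss_xi_def G_def by (simp add: cong_def)
    have "\<forall>y. [y = ss_xi M rt k i] (mod G i k) \<longleftrightarrow> [y = n k] (mod G i k)"
      using c by (meson cong_sym cong_trans)
    then show ?thesis using h1 h2 h3 hq by blast
  qed
  define P where "P y \<longleftrightarrow> (\<forall>i\<in>{1..L} - {k}. [int y = ss_xi M rt k i] (mod ss_Gamma M i k))"
    for y :: nat
  have Piff: "P y \<longleftrightarrow> (\<forall>i\<in>{1..L} - {k}. [int y = n k] (mod G i k))" for y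
    unfolding P_def using facts unfolding G_def by blast
  have Pn: "P (nat (n k))" unfolding Piff using nk0 by simp
  have low: "nat (n k) \<le> y" if Py: "P y" for y
  proof (rule ccontr)
    assume "\<not> nat (n k) \<le> y"
    then have lt: "int y < n k" by linarith
    define d where "d = (int y - n k) * M k"
    have dvd: "M i dvd d" if i: "i \<in> {1..L}" for i
    proof (cases "i = k")
      case True then show ?thesis by (simp add: d_def)
    next
      case False
      then have i': "i \<in> {1..L} - {k}" using i by auto
      have "G i k dvd (int y - n k)" using Py i' unfolding Piff cong_iff_dvd_diff by blast
      then have "G i k * gcd (M k) (M i) dvd (int y - n k) * (G k i * gcd (M k) (M i))"
        by (simp add: mult_dvd_mono)
      then show ?thesis using facts[OF i'] unfolding d_def by metis
    qed
    have "Lcm (M ` {1..L}) dvd d" by (rule Lcm_least) (use dvd in auto)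
    moreover have dnz: "d \<noteq> 0" using lt Mpos unfolding d_def by simp
    ultimately have "Lcm (M ` {1..L}) \<le> \<bar>d\<bar>" by (metis dvd_imp_le_int abs_ge_self order_trans)
    moreover have "\<bar>d\<bar> = (n k - int y) * M k" using lt Mpos unfolding d_def
      by (simp add: abs_mult)
    moreover have "(n k - int y) * M k \<le> n k * M k" using Mpos by simp
    moreover have "n k * M k \<le> N" unfolding n_def using Mpos
      by (metis minus_div_mult_eq_mod pos_mod_sign diff_ge_0_iff_ge)
    ultimately show False using assms(5) by linarith
  qed
  have least: "(LEAST y. P y) = nat (n k)"
    by (rule Least_equality) (use Pn low in auto)
  have nkeq: "ss_nk M rt L k = Some (n k)"
  proof -
    have ex: "\<exists>y. P y" using Pn by blast
    show ?thesis unfolding ss_nk_def using ex least nk0 unfolding P_def by auto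
  qed
  define nh where "nh i = (if i = k then n k
                        else (n k * ss_Gamma M k i - ss_q M rt k i) div ss_Gamma M i k)" for i
  have ss: "single_stage M rt L k = Some nh"
    unfolding single_stage_def nkeq nh_def by simp
  have tgt: "(N - N mod M i) div M i = n i" if "M i > 0" for i
    unfolding n_def using that by (metis minus_mod_eq_mult_div nonzero_mult_div_cancel_left
        less_irrefl)
  have "\<forall>i\<in>{1..L}. nh i = (N - N mod M i) div M i"
  proof
    fix i assume i: "i \<in> {1..L}"
    have Mi: "M i > 0" using assms(2) i by auto
    show "nh i = (N - N mod M i) div M i"
    proof (cases "i = k")
      case True then show ?thesis using tgt Mi by (simp add: nh_def)
    next
      case False
      then have i': "i \<in> {1..L} - {k}" using i by auto
      have "nh i = (n i * G i k) div G i k" using facts[OF i'] False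
        unfolding nh_def G_def by simp
      also have "\<dots> = n i" using facts[OF i'] by simp
      finally show ?thesis using tgt Mi by simp
    qed
  qed
  then show ?thesis using ss by blast
qed

end
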